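(* Let $n=2m>2$ and let $(A;B)\in GS(n)$ be Golay sequences. Then $(A;A;B;B)$ and $(B;B;A;A)$ belong to $NS(n)$, and they are equivalent (with respect to the equivalence relation on $NS(n)$ generated by the elementary transformations (E1)–(E5)) if and only if $B^*\in\{A,-A,A',-A'\}$.
   Context: A binary sequence is a finite sequence $A=a_1,\dots,a_n$ with $a_i\in\{\pm1\}$. Its nonperiodic autocorrelation function is $N_A(i)=\sum_{j\in\mathbb Z}a_ja_{i+j}$, where $a_k=0$ for $k<1$ or $k>n$. For binary sequences: $-A=-a_1,\dots,-a_n$, $A'=a_n,\dots,a_1$, $A^*=a_1,-a_2,a_3,\dots,(-1)^{n-1}a_n$. Golay sequences $GS(n)$: pairs $(A;B)$ of binary sequences of length $n$ with $N_A(i)+N_B(i)=0$ for all $i\ne0$. Normal sequences $NS(n)$: quadruples $(A;A;C;D)$ of binary sequences of length $n$ with $2N_A(i)+N_C(i)+N_D(i)=0$ for all $i\neq0$. Encoding: write $n=2m$ (even case). The $i$-th quad ($1\le i\le m$) of a pair $(X;Y)$ of length-$n$ sequences is $\begin{bmatrix} x_i & x_{n+1-i}\\ y_i & y_{n+1-i}\end{bmatrix}$; quads are labelled (rows as pairs) $1=[(+,+),(+,+)]$, $2=[(+,+),(-,-)]$, $3=[(-,+),(-,+)]$, $4=[(+,-),(-,+)]$, $5=[(-,+),(+,-)]$, $6=[(+,-),(+,-)]$, $7=[(-,-),(+,+)]$, $8=[(-,-),(-,-)]$. Elementary transformations of $(A;A;C;D)\in NS(n)$: (E1) replace both copies of $A$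 by $-A$, or $C$ by $-C$, or $D$ by $-D$; (E2) replace both copies of $A$ by $A'$, or $C$ by $C'$, or $D$ by $D'$; (E3) interchange $C$ and $D$; (E4) replace $(C;D)$ by the pair obtained by replacing, for every $i$ whose $i$-th quad of $(C;D)$ has label $4$, that quad by the quad labelled $5$, and vice versa (all other quads unchanged); this yields an element of $NS(n)$; (E5) replace $(A;A;C;D)$ by $(A^*;A^*;C^*;D^* )$. Two members of $NS(n)$ are equivalent if one is obtained from the other by a finite sequence of elementary transformations. *)

theory Defs
  imports Main
begin

text \<open>Binary sequences are lists of integers with entries in {1,-1}.
  The paper's index j (1-based) corresponds to list position j-1.\<close>

definition binary :: "int list \<Rightarrow> bool" where
  "binary A \<longleftrightarrow> set A \<subseteq> {1, -1}"

definition sval :: "int list \<Rightarrow> int \<Rightarrow> int" where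
  "sval A k = (if 1 \<le> k \<and> k \<le> int (length A) then A ! (nat k - 1) else 0)"

definition autocorr :: "int list \<Rightarrow> int \<Rightarrow> int" where
  "autocorr A i = (\<Sum>j\<in>{1..int (length A)}. sval A j * sval A (i + j))"

definition neg_seq :: "int list \<Rightarrow> int list" where
  "neg_seq A = map uminus A"

definition rev_seq :: "int list \<Rightarrow> int list" where
  "rev_seq A = rev A"

text \<open>A^* = a_1, -a_2, a_3, ..., (-1)^(n-1) a_n\<close>
definition alt_seq :: "int list \<Rightarrow> int list" where
  "alt_seq A = map (\<lambda>k. (-1) ^ k * A ! k) [0..<length A]"

definition GS :: "nat \<Rightarrow> (int list \<times> int list) set" where
  "GS n = {(A, B). length A = n \<and> length B = n \<and> binary A \<and> binary B \<and>
      (\<forall>i::int. i \<noteq> 0 \<longrightarrow> autocorr A i + autocorr B i = 0)}"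

definition NS :: "nat \<Rightarrow> (int list \<times> int list \<times> int list \<times> int list) set" where
  "NS n = {(A1, A2, C, D). A1 = A2 \<and> length A1 = n \<and> length C = n \<and> length D = n \<and>
      binary A1 \<and> binary C \<and> binary D \<and>
      (\<forall>i::int. i \<noteq> 0 \<longrightarrow> 2 * autocorr A1 i + autocorr C i + autocorr D i = 0)}"

text \<open>The i-th quad (1 \<le> i \<le> m, n = 2m) of a pair (X;Y):
  [[x_i, x_{n+1-i}], [y_i, y_{n+1-i}]], written as a pair of rows.\<close>
definition quad :: "int list \<Rightarrow> int list \<Rightarrow> nat \<Rightarrow> (int \<times> int) \<times> (int \<times> int)" where
  "quad X Y i = ((X ! (i - 1), X ! (length X - i)), (Y ! (i - 1), Y ! (length X - i)))"

definition quad4 :: "(int \<times> int) \<times> (int \<times> int)" where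
  "quad4 = ((1, -1), (-1, 1))"

definition quad5 :: "(int \<times> int) \<times> (int \<times> int)" where
  "quad5 = ((-1, 1), (1, -1))"

text \<open>Index (1-based) of the quad containing list position k (0-based), for even n.\<close>
definition quad_index :: "nat \<Rightarrow> nat \<Rightarrow> nat" where
  "quad_index n k = (if k < n div 2 then k + 1 else n - k)"

text \<open>(E4): every quad labelled 4 is replaced by the quad labelled 5 and vice versa;
  since quad5 is the entrywise negation of quad4, this negates the four entries of such quads.\<close>
definition swap_quad :: "(int \<times> int) \<times> (int \<times> int) \<Rightarrow> (int \<times> int) \<times> (int \<times> int)" where
  "swap_quad q = (if q = quad4 then quad5 else if q = quad5 then quad4 else q)"

definition e4 :: "int list \<Rightarrow> int list \<Rightarrow> int list \<times> int list" where
  "e4 X Y = (let n = length X;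
       new = (\<lambda>k. swap_quad (quad X Y (quad_index n k)));
       pick = (\<lambda>k q. if k < n div 2 then q else (snd q, fst q))
     in (map (\<lambda>k. fst (fst (map_prod (pick k) (pick k) (new k)))) [0..<n],
         map (\<lambda>k. fst (snd (map_prod (pick k) (pick k) (new k)))) [0..<n]))"

type_synonym quadruple = "int list \<times> int list \<times> int list \<times> int list"

inductive elem_trans :: "quadruple \<Rightarrow> quadruple \<Rightarrow> bool" where
  E1a: "elem_trans (A, A, C, D) (neg_seq A, neg_seq A, C, D)"
| E1c: "elem_trans (A, A, C, D) (A, A, neg_seq C, D)"
| E1d: "elem_trans (A, A, C, D) (A, A, C, neg_seq D)"
| E2a: "elem_trans (A, A, C, D) (rev_seq A, rev_seq A, C, D)"
| E2c: "elem_trans (A, A, C, D) (A, A, rev_seq C, D)"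
| E2d: "elem_trans (A, A, C, D) (A, A, C, rev_seq D)"
| E3: "elem_trans (A, A, C, D) (A, A, D, C)"
| E4: "elem_trans (A, A, C, D) (A, A, fst (e4 C D), snd (e4 C D))"
| E5: "elem_trans (A, A, C, D) (alt_seq A, alt_seq A, alt_seq C, alt_seq D)"

definition ns_equiv :: "nat \<Rightarrow> quadruple \<Rightarrow> quadruple \<Rightarrow> bool" where
  "ns_equiv n X Y \<longleftrightarrow> X \<in> NS n \<and> Y \<in> NS n \<and>
     (elem_trans\<^sup>*\<^sup>* X Y \<or> elem_trans\<^sup>*\<^sup>* Y X)"

end

theory Submission
  imports Defs
begin

lemma len_neg[simp]: "length (neg_seq x) = length x" by (simp add: neg_seq_def)
lemma len_rev[simp]: "length (rev_seq x) = length x" by (simp add: rev_seq_def)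
lemma len_alt[simp]: "length (alt_seq x) = length x" by (simp add: alt_seq_def)

lemma neg_neg[simp]: "neg_seq (neg_seq x) = x" by (simp add: neg_seq_def comp_def)
lemma rev_rev'[simp]: "rev_seq (rev_seq x) = x" by (simp add: rev_seq_def)
lemma rev_neg[simp]: "rev_seq (neg_seq x) = neg_seq (rev_seq x)" by (simp add: rev_seq_def neg_seq_def rev_map)
lemma alt_neg[simp]: "alt_seq (neg_seq x) = neg_seq (alt_seq x)"
  by (rule nth_equalityI) (auto simp: alt_seq_def neg_seq_def)
lemma alt_alt[simp]: "alt_seq (alt_seq x) = x"
proof (rule nth_equalityI)
  fix i assume "i < length (alt_seq (alt_seq x))"
  then have "i < length x" by simp
  then show "alt_seq (alt_seq x) ! i = x ! i"
    by (simp add: alt_seq_def mult.assoc[symmetric] power_mult_distrib[symmetric])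
qed simp

lemma alt_rev[simp]:
  assumes "even (length x)"
  shows "alt_seq (rev_seq x) = neg_seq (rev_seq (alt_seq x))"
proof (rule nth_equalityI)
  fix k assume "k < length (alt_seq (rev_seq x))"
  then have k: "k < length x" by simp
  have e: "(-1::int) ^ (length x - Suc k) = - ((-1) ^ k)"
  proof (cases "even k")
    case True
    then have "odd (length x - Suc k)" using assms k by auto
    then show ?thesis using True by simp
  next
    case False
    then have "even (length x - Suc k)" using assms k by auto
    then show ?thesis using False by simp
  qed
  show "alt_seq (rev_seq x) ! k = neg_seq (rev_seq (alt_seq x)) ! k"
  proof -
    have k1: "length x - Suc k < length x" using k by simp
    show ?thesis
    using k k1 by (simp add: alt_seq_def rev_seq_def neg_seq_def rev_nth e)
  qed
qed simp

definition orb :: "int list \<Rightarrow> int list set" where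
  "orb X = {X, neg_seq X, rev_seq X, neg_seq (rev_seq X), alt_seq X, neg_seq (alt_seq X),
     rev_seq (alt_seq X), neg_seq (rev_seq (alt_seq X))}"

lemma orb_closed:
  assumes "even (length X)" "Y \<in> orb X"
  shows "neg_seq Y \<in> orb X" "rev_seq Y \<in> orb X" "alt_seq Y \<in> orb X" "Y \<in> orb X"
  using assms by (auto simp: orb_def)

lemma reach:
  assumes "elem_trans\<^sup>*\<^sup>* X Y" "even (length (fst X))"
  shows "fst Y \<in> orb (fst X)"
  using assms(1)
proof (induction rule: rtranclp_induct)
  case base then show ?case by (simp add: orb_def)
next
  case (step Y Z)
  from step(2) show ?case
    by cases (use step(3) orb_closed[OF assms(2)] in auto)
qed

lemma autocorr_last:
  assumes "length X = n" "n \<ge> 2"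
  shows "autocorr X (int n - 1) = X ! 0 * X ! (n - 1)"
proof -
  have "{1..int n} = insert 1 {2..int n}" using assms by auto
  then have "autocorr X (int n - 1) = sval X 1 * sval X (int n - 1 + 1)
      + (\<Sum>j\<in>{2..int n}. sval X j * sval X (int n - 1 + j))"
    using assms by (simp add: autocorr_def)
  also have "(\<Sum>j\<in>{2..int n}. sval X j * sval X (int n - 1 + j)) = 0"
    by (rule sum.neutral) (use assms in \<open>auto simp: sval_def\<close>)
  also have "sval X 1 * sval X (int n - 1 + 1) = X ! 0 * X ! (n - 1)"
    using assms by (simp add: sval_def nat_diff_distrib)
  finally show ?thesis by simp
qed

lemma binary_prod:
  assumes "binary X" "i < length X" "j < length X"
  shows "X ! i * X ! j \<noteq> 0"
proof -
  have "X ! i \<in> {1,-1}" "X ! j \<in> {1,-1}" using assms nth_mem unfolding binary_def by blast+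
  then show ?thesis by auto
qed

lemma not_trivial:
  assumes "length X = n" "length Y = n" "n \<ge> 2" "binary X"
    "\<forall>i::int. i \<noteq> 0 \<longrightarrow> autocorr X i + autocorr Y i = 0"
    "Y \<in> {X, neg_seq X, rev_seq X, neg_seq (rev_seq X)}"
  shows False
proof -
  have h: "autocorr X (int n - 1) + autocorr Y (int n - 1) = 0" using assms(5,3) by auto
  have "Y ! 0 * Y ! (n - 1) = X ! 0 * X ! (n - 1)"
  proof -
    have i: "0 < n" "n - 1 < n" using assms(3) by auto
    have r: "rev X ! 0 = X ! (n - 1)" "rev X ! (n - 1) = X ! 0"
      using i assms(1) by (auto simp: rev_nth)
    have j: "0 < length X" "n - 1 < length X" "0 < length (rev X)" "n - 1 < length (rev X)"
      "n - Suc 0 < length X" "n - Suc 0 < length (rev X)"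
      using i assms(1) by auto
    show ?thesis using assms(6) r by (auto simp: neg_seq_def rev_seq_def nth_map[OF j(1)]
        nth_map[OF j(2)] nth_map[OF j(3)] nth_map[OF j(4)] nth_map[OF j(5)] nth_map[OF j(6)] simp del: length_rev)
  qed
  then have "autocorr Y (int n - 1) = X ! 0 * X ! (n - 1)"
    using autocorr_last[OF assms(2,3)] by simp
  moreover have "X ! 0 * X ! (n - 1) \<noteq> 0" using binary_prod[OF assms(4), of 0 "n - 1"] assms(1,3) by simp
  ultimately show False using h autocorr_last[OF assms(1,3)] by simp
qed

theorem mainTheorem3:
  fixes n m :: nat and A B :: "int list"
  assumes "n = 2 * m" and "n > 2" and "(A, B) \<in> GS n"
  shows "(A, A, B, B) \<in> NS n \<and> (B, B, A, A) \<in> NS n \<and>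
    (ns_equiv n (A, A, B, B) (B, B, A, A) \<longleftrightarrow>
      alt_seq B \<in> {A, neg_seq A, rev_seq A, neg_seq (rev_seq A)})"
proof -
  from assms(3) have lA: "length A = n" and lB: "length B = n" and bA: "binary A"
    and bB: "binary B" and G: "\<forall>i::int. i \<noteq> 0 \<longrightarrow> autocorr A i + autocorr B i = 0"
    by (auto simp: GS_def)
  have G': "\<forall>i::int. i \<noteq> 0 \<longrightarrow> autocorr B i + autocorr A i = 0" using G by (simp add: add.commute)
  have ev: "even (length A)" "even (length B)" using lA lB assms(1) by auto
  have NS1: "(A, A, B, B) \<in> NS n" using lA lB bA bB G by (auto simp: NS_def)
  have NS2: "(B, B, A, A) \<in> NS n" using lA lB bA bB G by (auto simp: NS_def)
  have n2: "n \<ge> 2" using assms(2) by simp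
  have "ns_equiv n (A, A, B, B) (B, B, A, A) \<longleftrightarrow>
      alt_seq B \<in> {A, neg_seq A, rev_seq A, neg_seq (rev_seq A)}"
  proof
    assume "ns_equiv n (A, A, B, B) (B, B, A, A)"
    then consider "elem_trans\<^sup>*\<^sup>* (A, A, B, B) (B, B, A, A)" | "elem_trans\<^sup>*\<^sup>* (B, B, A, A) (A, A, B, B)"
      unfolding ns_equiv_def by blast
    then show "alt_seq B \<in> {A, neg_seq A, rev_seq A, neg_seq (rev_seq A)}"
    proof cases
      case 1
      from reach[OF 1] ev have "B \<in> orb A" by simp
      moreover have "B \<notin> {A, neg_seq A, rev_seq A, neg_seq (rev_seq A)}"
        using not_trivial[OF lA lB n2 bA G] by blast
      ultimately show ?thesis using ev by (auto simp: orb_def)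
    next
      case 2
      from reach[OF 2] ev have "A \<in> orb B" by simp
      moreover have "A \<notin> {B, neg_seq B, rev_seq B, neg_seq (rev_seq B)}"
        using not_trivial[OF lB lA n2 bB G'] by blast
      ultimately show ?thesis using ev by (auto simp: orb_def)
    qed
  next
    assume H: "alt_seq B \<in> {A, neg_seq A, rev_seq A, neg_seq (rev_seq A)}"
    have "elem_trans\<^sup>*\<^sup>* (A, A, B, B) (B, B, A, A)"
    proof -
      from H consider "alt_seq B = A" | "alt_seq B = neg_seq A" | "alt_seq B = rev_seq A"
        | "alt_seq B = neg_seq (rev_seq A)" by blast
      then show ?thesis
      proof cases
        case 1
        then have "alt_seq A = B" by (metis alt_alt)
        then show ?thesis using elem_trans.E5[of A B B] 1 by auto
      next
        case 2
        have "B = neg_seq (alt_seq A)" using arg_cong[OF 2, of alt_seq] by simp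
        then have a: "alt_seq A = neg_seq B" by simp
        have "elem_trans (A, A, B, B) (neg_seq B, neg_seq B, neg_seq A, neg_seq A)"
          using elem_trans.E5[of A B B] a 2 by simp
        moreover have "elem_trans (neg_seq B, neg_seq B, neg_seq A, neg_seq A) (B, B, neg_seq A, neg_seq A)"
          using elem_trans.E1a[of "neg_seq B"] by simp
        moreover have "elem_trans (B, B, neg_seq A, neg_seq A) (B, B, A, neg_seq A)"
          using elem_trans.E1c[of B "neg_seq A"] by simp
        moreover have "elem_trans (B, B, A, neg_seq A) (B, B, A, A)"
          using elem_trans.E1d[of B A "neg_seq A"] by simp
        ultimately show ?thesis by (meson rtranclp.rtrancl_into_rtrancl rtranclp.rtrancl_refl)
      next
        case 3
        have "B = neg_seq (rev_seq (alt_seq A))" using arg_cong[OF 3, of alt_seq] ev by simp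
        then have a: "alt_seq A = neg_seq (rev_seq B)" by simp
        have "elem_trans (A, A, B, B) (neg_seq (rev_seq B), neg_seq (rev_seq B), rev_seq A, rev_seq A)"
          using elem_trans.E5[of A B B] a 3 by simp
        moreover have "elem_trans (neg_seq (rev_seq B), neg_seq (rev_seq B), rev_seq A, rev_seq A) (rev_seq B, rev_seq B, rev_seq A, rev_seq A)"
          using elem_trans.E1a[of "neg_seq (rev_seq B)"] by simp
        moreover have "elem_trans (rev_seq B, rev_seq B, rev_seq A, rev_seq A) (B, B, rev_seq A, rev_seq A)"
          using elem_trans.E2a[of "rev_seq B"] by simp
        moreover have "elem_trans (B, B, rev_seq A, rev_seq A) (B, B, A, rev_seq A)"
          using elem_trans.E2c[of B "rev_seq A"] by simp
        moreover have "elem_trans (B, B, A, rev_seq A) (B, B, A, A)"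
          using elem_trans.E2d[of B A "rev_seq A"] by simp
        ultimately show ?thesis by (meson rtranclp.rtrancl_into_rtrancl rtranclp.rtrancl_refl)
      next
        case 4
        have "B = rev_seq (alt_seq A)" using arg_cong[OF 4, of alt_seq] ev by simp
        then have a: "alt_seq A = rev_seq B" by simp
        have "elem_trans (A, A, B, B) (rev_seq B, rev_seq B, neg_seq (rev_seq A), neg_seq (rev_seq A))"
          using elem_trans.E5[of A B B] a 4 by simp
        moreover have "elem_trans (rev_seq B, rev_seq B, neg_seq (rev_seq A), neg_seq (rev_seq A)) (B, B, neg_seq (rev_seq A), neg_seq (rev_seq A))"
          using elem_trans.E2a[of "rev_seq B"] by simp
        moreover have "elem_trans (B, B, neg_seq (rev_seq A), neg_seq (rev_seq A)) (B, B, rev_seq A, neg_seq (rev_seq A))"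
          using elem_trans.E1c[of B "neg_seq (rev_seq A)"] by simp
        moreover have "elem_trans (B, B, rev_seq A, neg_seq (rev_seq A)) (B, B, rev_seq A, rev_seq A)"
          using elem_trans.E1d[of B "rev_seq A" "neg_seq (rev_seq A)"] by simp
        moreover have "elem_trans (B, B, rev_seq A, rev_seq A) (B, B, A, rev_seq A)"
          using elem_trans.E2c[of B "rev_seq A"] by simp
        moreover have "elem_trans (B, B, A, rev_seq A) (B, B, A, A)"
          using elem_trans.E2d[of B A "rev_seq A"] by simp
        ultimately show ?thesis by (meson rtranclp.rtrancl_into_rtrancl rtranclp.rtrancl_refl)
      qed
    qed
    then show "ns_equiv n (A, A, B, B) (B, B, A, A)" using NS1 NS2 by (simp add: ns_equiv_def)
  qed
  then show ?thesis using NS1 NS2 by simp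
qed

end
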